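(* Let $\mathcal{X}\subseteq\mathcal{B}(0,R)$ be compact convex, $\mathcal{Z}$ a set and $f:\mathcal{X}\times\mathcal{Z}\to\mathbb{R}$ with $f(\cdot,z)\in\mathcal{F}^0_{\mathcal{X}}(L)$ for all $z$. Suppose $T\le n$. For sampling-with-replacement SGD $\mathcal{A}_{\sf rSGD}$ with step sizes $(\eta_t)_{t\in[T]}$ and any neighboring datasets $S\simeq S'$, $$\mathbb{E}\big[\|\mathcal{A}_{\sf rSGD}(S)-\mathcal{A}_{\sf rSGD}(S')\|\big]\le\min\Big(2R,\;3L\frac{T-1}{n}\Big(\sqrt{\sum_{t=1}^{T-1}\eta_t^2}+\frac1n\sum_{t=1}^{T-1}\eta_t\Big)\Big).$$
   Context: $\mathcal{F}^0_{\mathcal{X}}(L)$ is the class of convex $L$-Lipschitz functions on $\mathcal{X}$ (Lipschitz on an open set containing $\mathcal{X}$, so subgradients have norm at most $L$). $\mathcal{A}_{\sf rSGD}$ on $S=(z_1,\dots,z_n)$: from a fixed initial point $x^1\in\mathcal{X}$, for $t=1,\dots,T-1$ draw $\mathbf{i}_t\sim\mathrm{Unif}([n])$ independently and set $x^{t+1}=\mathsf{Proj}_{\mathcal{X}}(x^t-\eta_t\nabla f(x^t,z_{\mathbf{i}_t}))$, where $\nabla f(x,z)$ is a fixed selection of a subgradient; output $\frac{1}{\sum_t\eta_t}\sum_{t\in[T]}\eta_tx^t$. The runs on $S$ and $S'$ use the same initial point and the same indices; the expectation is over the indices. $S\simeq S'$ means the datasets differ in at most one entry. *)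

theory Defs
  imports "HOL-Analysis.Analysis"
begin

definition proj_set :: "'a::euclidean_space set \<Rightarrow> 'a \<Rightarrow> 'a" where
  "proj_set X y = (SOME p. p \<in> X \<and> (\<forall>q\<in>X. dist y p \<le> dist y q))"

text \<open>Iterates of sampling-with-replacement projected SGD.
  rsgd_iter X g \<eta> x1 S idx k is the iterate x^(k+1): x^1 = x1 and
  x^(t+1) = Proj_X (x^t - \<eta>_t * grad f(x^t, z_(idx t))), where the dataset is
  S :: nat \<Rightarrow> 'z with entries S 0, ..., S (n-1) and idx t \<in> {0..<n}.\<close>
fun rsgd_iter :: "'a::euclidean_space set \<Rightarrow> ('a \<Rightarrow> 'z \<Rightarrow> 'a) \<Rightarrow> (nat \<Rightarrow> real) \<Rightarrow> 'a
    \<Rightarrow> (nat \<Rightarrow> 'z) \<Rightarrow> (nat \<Rightarrow> nat) \<Rightarrow> nat \<Rightarrow> 'a" where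
  "rsgd_iter X g \<eta> x1 S idx 0 = x1"
| "rsgd_iter X g \<eta> x1 S idx (Suc k) =
     proj_set X (rsgd_iter X g \<eta> x1 S idx k
                 - \<eta> (Suc k) *\<^sub>R g (rsgd_iter X g \<eta> x1 S idx k) (S (idx (Suc k))))"

definition rsgd_out :: "'a::euclidean_space set \<Rightarrow> ('a \<Rightarrow> 'z \<Rightarrow> 'a) \<Rightarrow> (nat \<Rightarrow> real) \<Rightarrow> 'a
    \<Rightarrow> nat \<Rightarrow> (nat \<Rightarrow> 'z) \<Rightarrow> (nat \<Rightarrow> nat) \<Rightarrow> 'a" where
  "rsgd_out X g \<eta> x1 T S idx =
     (1 / (\<Sum>t=1..T. \<eta> t)) *\<^sub>R (\<Sum>t=1..T. \<eta> t *\<^sub>R rsgd_iter X g \<eta> x1 S idx (t - 1))"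

text \<open>Expectation over independent uniform indices idx 1, ..., idx (T-1) in {0..<n}.\<close>
definition idx_expect :: "nat \<Rightarrow> nat \<Rightarrow> ((nat \<Rightarrow> nat) \<Rightarrow> real) \<Rightarrow> real" where
  "idx_expect n T h =
     (\<Sum>idx \<in> PiE {1..<T} (\<lambda>_. {..<n}). h idx) / real n ^ (T - 1)"

definition neighbors :: "nat \<Rightarrow> (nat \<Rightarrow> 'z) \<Rightarrow> (nat \<Rightarrow> 'z) \<Rightarrow> bool" where
  "neighbors n S S' \<longleftrightarrow> card {i \<in> {..<n}. S i \<noteq> S' i} \<le> 1"

end

theory Submission
  imports Defs
begin



lemma proj_eq: "proj_set X = closest_point X"
  by (rule ext) (simp add: proj_set_def closest_point_def)

lemma grad_bound:
  fixes v x :: "'a::real_inner" and h :: "'a \<Rightarrow> real"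
  assumes U: "open U" "x \<in> U" and lip: "L-lipschitz_on U h"
    and sub: "\<forall>y\<in>U. h y \<ge> h x + v \<bullet> (y - x)"
  shows "norm v \<le> L"
proof (cases "v = 0")
  case True then show ?thesis using lipschitz_on_nonneg[OF lip] by simp
next
  case False
  obtain e where e: "e > 0" "ball x e \<subseteq> U" using U openE by blast
  define y where "y = x + ((e/2) / norm v) *\<^sub>R v"
  have nv: "norm v > 0" using False by simp
  have dy: "dist y x = e/2" using nv e by (simp add: y_def dist_norm)
  have "y \<in> U" using e dy by (auto simp: dist_commute)
  then have "h y \<ge> h x + v \<bullet> (y - x)" using sub by blast
  moreover have "v \<bullet> (y - x) = (e/2) * norm v"
    using nv by (simp add: y_def inner_commute power2_norm_eq_inner[symmetric] power2_eq_square)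
  moreover have "dist (h y) (h x) \<le> L * dist y x"
    using lip \<open>y \<in> U\<close> U(2) by (auto simp: lipschitz_on_def)
  ultimately have "h x + (e/2) * norm v \<le> h y" "h y - h x \<le> L * (e/2)"
    using dy by (auto simp: dist_real_def abs_le_iff)
  then have "(e/2) * norm v \<le> (e/2) * L" by (simp add: mult.commute)
  then show ?thesis using e by (simp add: mult_le_cancel_left_pos)
qed

lemma grad_mono:
  fixes v w x y :: "'a::real_inner" and h :: "'a \<Rightarrow> real"
  assumes "h y \<ge> h x + v \<bullet> (y - x)" "h x \<ge> h y + w \<bullet> (x - y)"
  shows "(v - w) \<bullet> (x - y) \<ge> 0"
proof -
  have "v \<bullet> (y - x) + w \<bullet> (x - y) \<le> 0" using assms by linarith
  moreover have "v \<bullet> (y - x) = - (v \<bullet> (x - y))" by (simp add: inner_diff_right)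
  ultimately show ?thesis by (simp add: inner_diff_left)
qed

lemma sq_expand:
  fixes a b :: "'a::real_inner"
  shows "(norm (a - c *\<^sub>R b))\<^sup>2 = (norm a)\<^sup>2 - 2 * c * (b \<bullet> a) + c\<^sup>2 * (norm b)\<^sup>2"
  unfolding power2_norm_eq_inner
  by (simp add: inner_diff_left inner_diff_right inner_commute algebra_simps power2_eq_square)

lemma step_same:
  fixes v w x y :: "'a::real_inner"
  assumes "norm v \<le> L" "norm w \<le> L" "(v - w) \<bullet> (x - y) \<ge> 0" "e \<ge> 0"
  shows "(norm ((x - e *\<^sub>R v) - (y - e *\<^sub>R w)))\<^sup>2 \<le> (norm (x - y))\<^sup>2 + (2 * L * e)\<^sup>2"
proof -
  have eq: "(x - e *\<^sub>R v) - (y - e *\<^sub>R w) = (x - y) - e *\<^sub>R (v - w)" by (simp add: algebra_simps)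
  have nb: "norm (v - w) \<le> 2 * L" using assms norm_triangle_ineq4[of v w] by linarith
  have "(norm ((x - y) - e *\<^sub>R (v - w)))\<^sup>2 = (norm (x - y))\<^sup>2 - 2 * e * ((v - w) \<bullet> (x - y)) + e\<^sup>2 * (norm (v - w))\<^sup>2"
    using sq_expand[of "x - y" e "v - w"] .
  also have "\<dots> \<le> (norm (x - y))\<^sup>2 + e\<^sup>2 * (2 * L)\<^sup>2"
  proof -
    have "2 * e * ((v - w) \<bullet> (x - y)) \<ge> 0" using assms by simp
    moreover have "e\<^sup>2 * (norm (v - w))\<^sup>2 \<le> e\<^sup>2 * (2 * L)\<^sup>2"
      using nb by (intro mult_left_mono power_mono) auto
    ultimately show ?thesis by linarith
  qed
  also have "\<dots> = (norm (x - y))\<^sup>2 + (2 * L * e)\<^sup>2" by (simp add: power_mult_distrib)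
  finally show ?thesis by (simp only: eq)
qed

lemma step_diff:
  fixes v w x y :: "'a::real_normed_vector"
  assumes "norm v \<le> L" "norm w \<le> L" "e \<ge> 0"
  shows "norm ((x - e *\<^sub>R v) - (y - e *\<^sub>R w)) \<le> norm (x - y) + 2 * L * e"
proof -
  have eq: "(x - e *\<^sub>R v) - (y - e *\<^sub>R w) = (x - y) - e *\<^sub>R (v - w)" by (simp add: algebra_simps)
  have nb: "norm (v - w) \<le> 2 * L" using assms norm_triangle_ineq4[of v w] by linarith
  have "norm ((x - y) - e *\<^sub>R (v - w)) \<le> norm (x - y) + e * norm (v - w)"
    using norm_triangle_ineq4[of "x - y" "e *\<^sub>R (v - w)"] assms by simp
  also have "\<dots> \<le> norm (x - y) + 2 * L * e" using mult_left_mono[OF nb assms(3)] by (simp add: mult.commute)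
  finally show ?thesis by (simp only: eq)
qed



lemma sqrt_add_aux:
  fixes A B c :: real
  assumes "A \<ge> 0" "B \<ge> 0" "d \<le> sqrt A + B" "d' \<ge> 0" "d'\<^sup>2 \<le> d\<^sup>2 + c\<^sup>2" "d \<ge> 0"
  shows "d' \<le> sqrt (A + c\<^sup>2) + B"
proof -
  have sA: "sqrt A \<le> sqrt (A + c\<^sup>2)" by simp
  have "d\<^sup>2 \<le> (sqrt A + B)\<^sup>2" using assms by (intro power_mono) auto
  then have "d'\<^sup>2 \<le> (sqrt A + B)\<^sup>2 + c\<^sup>2" using assms by linarith
  also have "\<dots> = A + 2 * B * sqrt A + B\<^sup>2 + c\<^sup>2" using assms by (simp add: power2_eq_square algebra_simps)
  also have "\<dots> \<le> (A + c\<^sup>2) + 2 * B * sqrt (A + c\<^sup>2) + B\<^sup>2"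
    using mult_left_mono[OF sA, of "2*B"] assms by simp
  also have "\<dots> = (sqrt (A + c\<^sup>2) + B)\<^sup>2" using assms by (simp add: power2_eq_square algebra_simps)
  finally have "d'\<^sup>2 \<le> (sqrt (A + c\<^sup>2) + B)\<^sup>2" .
  then show ?thesis by (rule power2_le_imp_le) (use assms in simp)
qed

lemma seq_zero:
  fixes \<delta> :: "nat \<Rightarrow> real" and d :: "nat \<Rightarrow> bool"
  assumes zero: "\<And>k. k < m \<Longrightarrow> \<not> d (Suc k) \<Longrightarrow> \<delta> k = 0 \<Longrightarrow> \<delta> (Suc k) = 0"
    and d0: "\<delta> 0 = 0"
  shows "k \<le> m \<Longrightarrow> \<not> (\<exists>r\<in>{1..k}. d r) \<Longrightarrow> \<delta> k = 0"
proof (induction k)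
  case 0 then show ?case using d0 by simp
next
  case (Suc k)
  then have "\<delta> k = 0" by auto
  moreover have "\<not> d (Suc k)" using Suc.prems by auto
  ultimately show ?case using zero Suc.prems by auto
qed

lemma seq_bound:
  fixes \<delta> c :: "nat \<Rightarrow> real" and d :: "nat \<Rightarrow> bool"
  assumes nn: "\<And>k. \<delta> k \<ge> 0" and c0: "\<And>s. s \<in> {1..m} \<Longrightarrow> c s \<ge> 0"
    and zero: "\<And>k. k < m \<Longrightarrow> \<not> d (Suc k) \<Longrightarrow> \<delta> k = 0 \<Longrightarrow> \<delta> (Suc k) = 0"
    and same: "\<And>k. k < m \<Longrightarrow> \<not> d (Suc k) \<Longrightarrow> (\<delta> (Suc k))\<^sup>2 \<le> (\<delta> k)\<^sup>2 + (c (Suc k))\<^sup>2"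
    and diff: "\<And>k. k < m \<Longrightarrow> \<delta> (Suc k) \<le> \<delta> k + c (Suc k)"
    and d0: "\<delta> 0 = 0"
  shows "k \<le> m \<Longrightarrow> \<delta> k \<le> sqrt (\<Sum>s=1..k. (c s)\<^sup>2) + (\<Sum>s\<in>{s\<in>{1..k}. d s \<and> (\<exists>r\<in>{1..<s}. d r)}. c s)"
proof (induction k)
  case 0 then show ?case using d0 by simp
next
  case (Suc k)
  define A where "A = (\<Sum>s=1..k. (c s)\<^sup>2)"
  define D where "D = {s\<in>{1..k}. d s \<and> (\<exists>r\<in>{1..<s}. d r)}"
  define B where "B = (\<Sum>s\<in>D. c s)"
  have km: "k < m" using Suc.prems by simp
  have IH: "\<delta> k \<le> sqrt A + B" using Suc km by (simp add: A_def B_def D_def)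
  have A0: "A \<ge> 0" unfolding A_def by (simp add: sum_nonneg)
  have B0: "B \<ge> 0" unfolding B_def D_def using km c0 by (intro sum_nonneg) auto
  have fD: "finite D" unfolding D_def by simp
  have AS: "(\<Sum>s=1..Suc k. (c s)\<^sup>2) = A + (c (Suc k))\<^sup>2" unfolding A_def by simp
  have cS: "c (Suc k) \<ge> 0" using c0 km by simp
  show ?case
  proof (cases "d (Suc k)")
    case False
    have "{s\<in>{1..Suc k}. d s \<and> (\<exists>r\<in>{1..<s}. d r)} = D" unfolding D_def using False
      by (auto simp: le_Suc_eq)
    moreover have "\<delta> (Suc k) \<le> sqrt (A + (c (Suc k))\<^sup>2) + B"
      using sqrt_add_aux[OF A0 B0 IH nn same[OF km False] nn] .
    ultimately show ?thesis using AS by (simp add: B_def)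
  next
    case True
    show ?thesis
    proof (cases "\<exists>r\<in>{1..k}. d r")
      case True2: True
      have "{s\<in>{1..Suc k}. d s \<and> (\<exists>r\<in>{1..<s}. d r)} = insert (Suc k) D" unfolding D_def using True True2
        by (auto simp: le_Suc_eq)
      then have e1: "(\<Sum>s\<in>{s\<in>{1..Suc k}. d s \<and> (\<exists>r\<in>{1..<s}. d r)}. c s) = c (Suc k) + B"
        using fD by (simp add: B_def D_def)
      have l72: "\<delta> (Suc k) \<le> sqrt A + B + c (Suc k)" using diff[OF km] IH by simp
      have l73: "sqrt A \<le> sqrt (A + (c (Suc k))\<^sup>2)" by simp
      have "sqrt A + B + c (Suc k) \<le> sqrt (A + (c (Suc k))\<^sup>2) + (c (Suc k) + B)"
        using add_right_mono[OF l73, of "c (Suc k) + B"] by (simp add: add.assoc add.commute)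
      with l72 have "\<delta> (Suc k) \<le> sqrt (A + (c (Suc k))\<^sup>2) + (c (Suc k) + B)" by (rule order_trans)
      then show ?thesis using AS e1 by simp
    next
      case False2: False
      have "\<delta> k = 0" using km False2 by (intro seq_zero[of m d \<delta> k, OF zero d0]) auto
      have "{s\<in>{1..Suc k}. d s \<and> (\<exists>r\<in>{1..<s}. d r)} = {}"
      proof (intro equalityI subsetI)
        fix s assume "s \<in> {s\<in>{1..Suc k}. d s \<and> (\<exists>r\<in>{1..<s}. d r)}"
        then obtain r where "r \<in> {1..<s}" "d r" "s \<le> Suc k" by auto
        then have "r \<in> {1..k}" by auto
        then show "s \<in> {}" using False2 \<open>d r\<close> by blast
      qed simp
      moreover have "D = {}" unfolding D_def using False2 by auto
      ultimately have "{s\<in>{1..Suc k}. d s \<and> (\<exists>r\<in>{1..<s}. d r)} = D" by simp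
      moreover have "\<delta> (Suc k) \<le> c (Suc k)" using diff[OF km] \<open>\<delta> k = 0\<close> by simp
      moreover have "c (Suc k) \<le> sqrt (A + (c (Suc k))\<^sup>2)" using A0 cS
        by (intro real_le_rsqrt) simp
      ultimately show ?thesis using AS B0 by (simp add: B_def)
    qed
  qed
qed



lemma count_PiE:
  fixes I J :: "nat set" and D :: "nat set"
  assumes fI: "finite I" and JI: "J \<subseteq> I" and Dn: "D \<subseteq> {..<n}"
  shows "card (PiE I (\<lambda>_. {..<n}) \<inter> {idx. \<forall>j\<in>J. idx j \<in> D}) = card D ^ card J * n ^ (card I - card J)"
proof -
  have eq: "PiE I (\<lambda>_. {..<n}) \<inter> {idx. \<forall>j\<in>J. idx j \<in> D} = PiE I (\<lambda>i. if i \<in> J then D else {..<n})"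
    using JI Dn by (auto simp: PiE_def Pi_def)
  have fJ: "finite J" using fI JI finite_subset by blast
  have "card (PiE I (\<lambda>i. if i \<in> J then D else {..<n})) = (\<Prod>i\<in>I. if i \<in> J then card D else n)"
    using fI by (simp add: card_PiE if_distrib cong: if_cong)
  also have "\<dots> = (\<Prod>i\<in>I \<inter> {i. i \<in> J}. card D) * (\<Prod>i\<in>I \<inter> - {i. i \<in> J}. n)"
    using fI by (rule prod.If_cases)
  also have "I \<inter> {i. i \<in> J} = J" using JI by auto
  also have "I \<inter> - {i. i \<in> J} = I - J" by auto
  also have "(\<Prod>i\<in>J. card D) * (\<Prod>i\<in>I - J. n) = card D ^ card J * n ^ (card I - card J)"
    using JI fJ by (simp add: card_Diff_subset)
  finally show ?thesis using eq by simp
qed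

lemma count_PiE_real:
  fixes I J :: "nat set" and D :: "nat set"
  assumes fI: "finite I" and JI: "J \<subseteq> I" and Dn: "D \<subseteq> {..<n}" and D1: "card D \<le> 1" and n: "n > 0"
  shows "(\<Sum>idx\<in>PiE I (\<lambda>_. {..<n}). of_bool (\<forall>j\<in>J. idx j \<in> D) :: real) \<le> real n ^ card I / real n ^ card J"
proof -
  have fP: "finite (PiE I (\<lambda>_. {..<n}))" using fI by (simp add: finite_PiE)
  have "(\<Sum>idx\<in>PiE I (\<lambda>_. {..<n}). of_bool (\<forall>j\<in>J. idx j \<in> D) :: real)
      = real (card D ^ card J * n ^ (card I - card J))"
    using fP count_PiE[OF fI JI Dn] by simp
  also have "\<dots> \<le> real (n ^ (card I - card J))"
  proof -
    have "card D ^ card J \<le> 1" using power_mono[OF D1, of "card J"] by simp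
    then have "real (card D ^ card J) \<le> 1" by linarith
    then show ?thesis by (simp only: of_nat_mult) (rule mult_left_le_one_le, auto)
  qed
  also have "\<dots> = real n ^ card I / real n ^ card J"
  proof -
    have cJ: "card J \<le> card I" using fI JI by (simp add: card_mono)
    have "real n ^ card I = real n ^ (card I - card J) * real n ^ card J"
      using cJ by (simp add: power_add[symmetric])
    then show ?thesis using n by simp
  qed
  finally show ?thesis .
qed



theorem theoremA1:
  fixes X :: "'a::euclidean_space set" and R L :: real
    and f :: "'a \<Rightarrow> 'z \<Rightarrow> real" and g :: "'a \<Rightarrow> 'z \<Rightarrow> 'a"
    and U :: "'z \<Rightarrow> 'a set"
    and \<eta> :: "nat \<Rightarrow> real" and x1 :: 'a and n T :: nat and S S' :: "nat \<Rightarrow> 'z"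
  assumes "compact X" and "convex X" and "X \<subseteq> cball 0 R"
    and "\<And>z. open (U z)" and "\<And>z. X \<subseteq> U z"
    and "\<And>z. convex_on (U z) (\<lambda>x. f x z)"
    and "\<And>z. L-lipschitz_on (U z) (\<lambda>x. f x z)"
    and "\<And>x z. x \<in> X \<Longrightarrow> \<forall>y\<in>U z. f y z \<ge> f x z + g x z \<bullet> (y - x)"
    and "x1 \<in> X"
    and "1 \<le> T" and "T \<le> n"
    and "\<And>t. t \<in> {1..T} \<Longrightarrow> \<eta> t > 0"
    and "neighbors n S S'"
  shows "idx_expect n T (\<lambda>idx. norm (rsgd_out X g \<eta> x1 T S idx - rsgd_out X g \<eta> x1 T S' idx))
    \<le> min (2 * R)
         (3 * L * (real (T - 1) / real n) *
           (sqrt (\<Sum>t=1..T-1. (\<eta> t)\<^sup>2) + (1 / real n) * (\<Sum>t=1..T-1. \<eta> t)))"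
proof -
  have L0: "L \<ge> 0" using lipschitz_on_nonneg[OF assms(7)] .
  have n0: "n > 0" using assms(10,11) by simp
  have Xc: "closed X" using assms(1) compact_imp_closed by blast
  have Xne: "X \<noteq> {}" using assms(9) by blast
  have Pin: "\<And>y. proj_set X y \<in> X" using closest_point_in_set[OF Xc Xne] by (simp add: proj_eq)
  have Plip: "\<And>a b. norm (proj_set X a - proj_set X b) \<le> norm (a - b)"
    using closest_point_lipschitz[OF assms(2) Xc Xne] by (simp add: proj_eq dist_norm)
  have gb: "norm (g x z) \<le> L" if "x \<in> X" for x z
    using grad_bound[OF assms(4)[of z] _ assms(7)[of z] assms(8)[OF that, of z]] that assms(5) by blast
  have gm: "(g x z - g y z) \<bullet> (x - y) \<ge> 0" if "x \<in> X" "y \<in> X" for x y z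
  proof (rule grad_mono[where h = "\<lambda>x. f x z"])
    show "f y z \<ge> f x z + g x z \<bullet> (y - x)" using assms(8)[OF that(1), of z] assms(5) that(2) by blast
    show "f x z \<ge> f y z + g y z \<bullet> (x - y)" using assms(8)[OF that(2), of z] assms(5) that(1) by blast
  qed
  have inX: "rsgd_iter X g \<eta> x1 SS idx k \<in> X" for SS idx k
    by (cases k) (simp_all add: assms(9) Pin)
  define m where "m = T - 1"
  define I where "I = {1..m}"
  have IT: "{1..<T} = I" unfolding I_def m_def using assms(10) by auto
  have fI: "finite I" and cI: "card I = m" unfolding I_def by auto
  have Im: "\<And>s. s \<in> I \<Longrightarrow> s \<in> {1..T}" unfolding I_def m_def by auto
  have etaI: "\<And>s. s \<in> I \<Longrightarrow> \<eta> s > 0" using Im assms(12) by blast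
  define PI where "PI = PiE I (\<lambda>_. {..<n})"
  have fPI: "finite PI" unfolding PI_def using fI by (simp add: finite_PiE)
  have cPI: "card PI = n ^ m" unfolding PI_def using fI cI by (simp add: card_PiE)
  define Dset where "Dset = {i\<in>{..<n}. S i \<noteq> S' i}"
  have Dn: "Dset \<subseteq> {..<n}" unfolding Dset_def by auto
  have D1: "card Dset \<le> 1" using assms(13) unfolding Dset_def neighbors_def by simp
  define W where "W = (\<Sum>t=1..T. \<eta> t)"
  have W0: "W > 0" unfolding W_def using assms(10,12) by (intro sum_pos) auto
  define SQ where "SQ = sqrt (\<Sum>t\<in>I. (\<eta> t)\<^sup>2)"
  define SE where "SE = (\<Sum>t\<in>I. \<eta> t)"
  have SQ0: "SQ \<ge> 0" unfolding SQ_def by (simp add: sum_nonneg)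
  have SE0: "SE \<ge> 0" unfolding SE_def using etaI by (simp add: sum_nonneg less_imp_le)
  define F where "F idx = 2 * L * SQ * of_bool (\<exists>r\<in>I. idx r \<in> Dset)
      + (\<Sum>s\<in>I. 2 * L * \<eta> s * of_bool (idx s \<in> Dset \<and> (\<exists>r\<in>{1..<s}. idx r \<in> Dset)))" for idx :: "nat \<Rightarrow> nat"
  define h where "h idx = norm (rsgd_out X g \<eta> x1 T S idx - rsgd_out X g \<eta> x1 T S' idx)" for idx
  have key: "h idx \<le> F idx" if idxP: "idx \<in> PI" for idx
  proof -
    define x where "x k = rsgd_iter X g \<eta> x1 S idx k" for k
    define x' where "x' k = rsgd_iter X g \<eta> x1 S' idx k" for k
    define \<delta> where "\<delta> k = norm (x k - x' k)" for k
    define d where "d s = (S (idx s) \<noteq> S' (idx s))" for s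
    define c where "c s = 2 * L * \<eta> s" for s
    have xX: "x k \<in> X" "x' k \<in> X" for k unfolding x_def x'_def by (rule inX)+
    have xs: "x (Suc k) = proj_set X (x k - \<eta> (Suc k) *\<^sub>R g (x k) (S (idx (Suc k))))" for k
      unfolding x_def by simp
    have xs': "x' (Suc k) = proj_set X (x' k - \<eta> (Suc k) *\<^sub>R g (x' k) (S' (idx (Suc k))))" for k
      unfolding x'_def by simp
    have dD: "d s \<longleftrightarrow> idx s \<in> Dset" if "s \<in> I" for s
      using idxP that unfolding PI_def Dset_def d_def by (auto simp: PiE_def Pi_def)
    have etak: "\<eta> (Suc k) \<ge> 0" if "k < m" for k using etaI[of "Suc k"] that unfolding I_def by auto
    have nn: "\<And>k. \<delta> k \<ge> 0" unfolding \<delta>_def by simp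
    have c0: "c s \<ge> 0" if "s \<in> {1..m}" for s
    proof -
      have "\<eta> s > 0" using etaI that unfolding I_def by blast
      then show ?thesis using L0 unfolding c_def by simp
    qed
    have zero: "\<delta> (Suc k) = 0" if "k < m" "\<not> d (Suc k)" "\<delta> k = 0" for k
      using that unfolding \<delta>_def d_def by (simp add: xs xs')
    have same: "(\<delta> (Suc k))\<^sup>2 \<le> (\<delta> k)\<^sup>2 + (c (Suc k))\<^sup>2" if k: "k < m" "\<not> d (Suc k)" for k
    proof -
      let ?z = "S (idx (Suc k))"
      have z: "S' (idx (Suc k)) = ?z" using k(2) unfolding d_def by simp
      have "\<delta> (Suc k) \<le> norm ((x k - \<eta> (Suc k) *\<^sub>R g (x k) ?z) - (x' k - \<eta> (Suc k) *\<^sub>R g (x' k) ?z))"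
        unfolding \<delta>_def xs xs' z by (rule Plip)
      then have "(\<delta> (Suc k))\<^sup>2 \<le> (norm ((x k - \<eta> (Suc k) *\<^sub>R g (x k) ?z) - (x' k - \<eta> (Suc k) *\<^sub>R g (x' k) ?z)))\<^sup>2"
        using nn by (intro power_mono) auto
      also have "\<dots> \<le> (norm (x k - x' k))\<^sup>2 + (2 * L * \<eta> (Suc k))\<^sup>2"
        by (rule step_same[OF gb[OF xX(1)] gb[OF xX(2)] gm[OF xX(1) xX(2)] etak[OF k(1)]])
      finally show ?thesis unfolding \<delta>_def c_def .
    qed
    have diff: "\<delta> (Suc k) \<le> \<delta> k + c (Suc k)" if k: "k < m" for k
    proof -
      have "\<delta> (Suc k) \<le> norm ((x k - \<eta> (Suc k) *\<^sub>R g (x k) (S (idx (Suc k)))) - (x' k - \<eta> (Suc k) *\<^sub>R g (x' k) (S' (idx (Suc k)))))"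
        unfolding \<delta>_def xs xs' by (rule Plip)
      also have "\<dots> \<le> norm (x k - x' k) + 2 * L * \<eta> (Suc k)"
        by (rule step_diff[OF gb[OF xX(1)] gb[OF xX(2)] etak[OF k]])
      finally show ?thesis unfolding \<delta>_def c_def .
    qed
    have d0: "\<delta> 0 = 0" unfolding \<delta>_def x_def x'_def by simp
    have bnd: "\<delta> k \<le> sqrt (\<Sum>s=1..k. (c s)\<^sup>2) + (\<Sum>s\<in>{s\<in>{1..k}. d s \<and> (\<exists>r\<in>{1..<s}. d r)}. c s)"
      if "k \<le> m" for k
      using seq_bound[of \<delta> m c d k, OF nn c0 zero same diff d0 that] by blast
    have zer: "\<delta> k = 0" if "k \<le> m" "\<not> (\<exists>r\<in>{1..k}. d r)" for k
      using seq_zero[of m d \<delta> k, OF zero d0] that by blast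
    define Fd where "Fd = (if \<exists>r\<in>{1..m}. d r then sqrt (\<Sum>s=1..m. (c s)\<^sup>2) else 0)
        + (\<Sum>s\<in>{s\<in>{1..m}. d s \<and> (\<exists>r\<in>{1..<s}. d r)}. c s)"
    have Fd0: "0 \<le> (\<Sum>s\<in>{s\<in>{1..m}. d s \<and> (\<exists>r\<in>{1..<s}. d r)}. c s)"
      using c0 by (intro sum_nonneg) auto
    have dFd: "\<delta> k \<le> Fd" if k: "k \<le> m" for k
    proof (cases "\<exists>r\<in>{1..k}. d r")
      case True
      then have ex: "\<exists>r\<in>{1..m}. d r" using k by auto
      have sq: "sqrt (\<Sum>s=1..k. (c s)\<^sup>2) \<le> sqrt (\<Sum>s=1..m. (c s)\<^sup>2)"
        using k by (intro real_sqrt_le_mono sum_mono2) auto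
      have sm: "(\<Sum>s\<in>{s\<in>{1..k}. d s \<and> (\<exists>r\<in>{1..<s}. d r)}. c s) \<le> (\<Sum>s\<in>{s\<in>{1..m}. d s \<and> (\<exists>r\<in>{1..<s}. d r)}. c s)"
        using k c0 by (intro sum_mono2) auto
      show ?thesis unfolding Fd_def if_P[OF ex] using bnd[OF k] sq sm by linarith
    next
      case False
      have "0 \<le> Fd" unfolding Fd_def by (rule add_nonneg_nonneg[OF _ Fd0]) (simp add: sum_nonneg)
      then show ?thesis using zer[OF k False] by simp
    qed
    have FdF: "Fd = F idx"
    proof -
      have dD': "d s \<longleftrightarrow> idx s \<in> Dset" if "1 \<le> s" "s \<le> m" for s
        using dD[of s] that unfolding I_def by auto
      have e1: "(\<exists>r\<in>{1..m}. d r) = (\<exists>r\<in>I. idx r \<in> Dset)" using dD' unfolding I_def by auto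
      have e2: "sqrt (\<Sum>s=1..m. (c s)\<^sup>2) = 2 * L * SQ"
      proof -
        have "(\<Sum>s=1..m. (c s)\<^sup>2) = (2 * L)\<^sup>2 * (\<Sum>s\<in>I. (\<eta> s)\<^sup>2)"
          unfolding c_def I_def by (simp add: power_mult_distrib sum_distrib_left)
        then show ?thesis unfolding SQ_def using L0 by (simp add: real_sqrt_mult)
      qed
      have e3: "{s\<in>{1..m}. d s \<and> (\<exists>r\<in>{1..<s}. d r)} = I \<inter> {s. idx s \<in> Dset \<and> (\<exists>r\<in>{1..<s}. idx r \<in> Dset)}"
      proof (intro equalityI subsetI)
        fix s assume "s \<in> {s\<in>{1..m}. d s \<and> (\<exists>r\<in>{1..<s}. d r)}"
        then show "s \<in> I \<inter> {s. idx s \<in> Dset \<and> (\<exists>r\<in>{1..<s}. idx r \<in> Dset)}"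
          using dD' unfolding I_def by auto
      next
        fix s assume "s \<in> I \<inter> {s. idx s \<in> Dset \<and> (\<exists>r\<in>{1..<s}. idx r \<in> Dset)}"
        then show "s \<in> {s\<in>{1..m}. d s \<and> (\<exists>r\<in>{1..<s}. d r)}"
          using dD' unfolding I_def by auto
      qed
      have e4: "(\<Sum>s\<in>I. 2 * L * \<eta> s * of_bool (idx s \<in> Dset \<and> (\<exists>r\<in>{1..<s}. idx r \<in> Dset)))
          = (\<Sum>s\<in>I \<inter> {s. idx s \<in> Dset \<and> (\<exists>r\<in>{1..<s}. idx r \<in> Dset)}. c s)"
        unfolding c_def using fI by (rule sum_mult_of_bool_eq)
      show ?thesis unfolding Fd_def F_def e1 e2 e3 e4 by simp
    qed
    have diffout: "rsgd_out X g \<eta> x1 T S idx - rsgd_out X g \<eta> x1 T S' idx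
        = (1 / W) *\<^sub>R (\<Sum>t=1..T. \<eta> t *\<^sub>R (x (t - 1) - x' (t - 1)))"
    proof -
      have e: "(\<Sum>t=1..T. \<eta> t *\<^sub>R (x (t - 1) - x' (t - 1)))
          = (\<Sum>t=1..T. \<eta> t *\<^sub>R x (t - 1)) - (\<Sum>t=1..T. \<eta> t *\<^sub>R x' (t - 1))"
        by (simp add: sum_subtractf scaleR_diff_right)
      show ?thesis unfolding e unfolding rsgd_out_def W_def[symmetric] x_def x'_def
        by (rule scaleR_diff_right[symmetric])
    qed
    have "h idx = (1 / W) * norm (\<Sum>t=1..T. \<eta> t *\<^sub>R (x (t - 1) - x' (t - 1)))"
      unfolding h_def diffout using W0 by simp
    also have "\<dots> \<le> (1 / W) * (\<Sum>t=1..T. \<eta> t * Fd)"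
    proof (rule mult_left_mono)
      have "norm (\<Sum>t=1..T. \<eta> t *\<^sub>R (x (t - 1) - x' (t - 1))) \<le> (\<Sum>t=1..T. norm (\<eta> t *\<^sub>R (x (t - 1) - x' (t - 1))))"
        by (rule norm_sum)
      also have "\<dots> \<le> (\<Sum>t=1..T. \<eta> t * Fd)"
      proof (rule sum_mono)
        fix t assume t: "t \<in> {1..T}"
        have "t - 1 \<le> m" using t unfolding m_def by auto
        then have "\<delta> (t - 1) \<le> Fd" by (rule dFd)
        then show "norm (\<eta> t *\<^sub>R (x (t - 1) - x' (t - 1))) \<le> \<eta> t * Fd"
          using assms(12)[OF t] unfolding \<delta>_def by (simp add: mult_left_mono)
      qed
      finally show "norm (\<Sum>t=1..T. \<eta> t *\<^sub>R (x (t - 1) - x' (t - 1))) \<le> (\<Sum>t=1..T. \<eta> t * Fd)" .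
    qed (use W0 in simp)
    also have "\<dots> = Fd" unfolding sum_distrib_right[symmetric] W_def[symmetric] using W0 by simp
    finally show ?thesis using FdF by simp
  qed
  have outR: "norm (rsgd_out X g \<eta> x1 T SS idx) \<le> R" for SS idx
  proof -
    have "norm (rsgd_out X g \<eta> x1 T SS idx) = (1 / W) * norm (\<Sum>t=1..T. \<eta> t *\<^sub>R rsgd_iter X g \<eta> x1 SS idx (t - 1))"
      unfolding rsgd_out_def W_def[symmetric] using W0 by simp
    also have "\<dots> \<le> (1 / W) * (\<Sum>t=1..T. \<eta> t * R)"
    proof (rule mult_left_mono)
      have "norm (\<Sum>t=1..T. \<eta> t *\<^sub>R rsgd_iter X g \<eta> x1 SS idx (t - 1)) \<le> (\<Sum>t=1..T. norm (\<eta> t *\<^sub>R rsgd_iter X g \<eta> x1 SS idx (t - 1)))"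
        by (rule norm_sum)
      also have "\<dots> \<le> (\<Sum>t=1..T. \<eta> t * R)"
      proof (rule sum_mono)
        fix t assume t: "t \<in> {1..T}"
        have "norm (rsgd_iter X g \<eta> x1 SS idx (t - 1)) \<le> R" using inX assms(3) by (auto simp: subset_iff)
        then show "norm (\<eta> t *\<^sub>R rsgd_iter X g \<eta> x1 SS idx (t - 1)) \<le> \<eta> t * R"
          using assms(12)[OF t] by (simp add: mult_left_mono)
      qed
      finally show "norm (\<Sum>t=1..T. \<eta> t *\<^sub>R rsgd_iter X g \<eta> x1 SS idx (t - 1)) \<le> (\<Sum>t=1..T. \<eta> t * R)" .
    qed (use W0 in simp)
    also have "\<dots> = R" unfolding sum_distrib_right[symmetric] W_def[symmetric] using W0 by simp
    finally show ?thesis .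
  qed
  have hR: "h idx \<le> 2 * R" for idx
    unfolding h_def using norm_triangle_ineq4[of "rsgd_out X g \<eta> x1 T S idx" "rsgd_out X g \<eta> x1 T S' idx"]
      outR[of S idx] outR[of S' idx] by linarith
  have ob: "(of_bool (\<exists>r\<in>A. P r) :: real) \<le> (\<Sum>r\<in>A. of_bool (P r))" if "finite A" for A :: "nat set" and P
  proof (cases "\<exists>r\<in>A. P r")
    case True
    then obtain r where r: "r \<in> A" "P r" by blast
    have "(of_bool (P r) :: real) \<le> (\<Sum>r\<in>A. of_bool (P r))"
      by (rule member_le_sum[OF r(1)]) (use that in auto)
    then show ?thesis using True r by simp
  qed (simp add: sum_nonneg)
  have S1: "(\<Sum>idx\<in>PI. of_bool (\<exists>r\<in>I. idx r \<in> Dset) :: real) \<le> real m * (real n ^ m / real n)"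
  proof -
    have "(\<Sum>idx\<in>PI. of_bool (\<exists>r\<in>I. idx r \<in> Dset) :: real)
        \<le> (\<Sum>idx\<in>PI. \<Sum>r\<in>I. of_bool (\<forall>j\<in>{r}. idx j \<in> Dset))"
      using ob[OF fI] by (intro sum_mono) simp
    also have "\<dots> = (\<Sum>r\<in>I. \<Sum>idx\<in>PI. of_bool (\<forall>j\<in>{r}. idx j \<in> Dset))"
      by (rule sum.swap)
    also have "\<dots> \<le> (\<Sum>r\<in>I. real n ^ m / real n)"
    proof (rule sum_mono)
      fix r assume "r \<in> I"
      then show "(\<Sum>idx\<in>PI. of_bool (\<forall>j\<in>{r}. idx j \<in> Dset)) \<le> real n ^ m / real n"
        using count_PiE_real[OF fI _ Dn D1 n0, of "{r}"] cI unfolding PI_def by simp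
    qed
    also have "\<dots> = real m * (real n ^ m / real n)" using cI by simp
    finally show ?thesis .
  qed
  have S2: "(\<Sum>idx\<in>PI. of_bool (idx s \<in> Dset \<and> (\<exists>r\<in>{1..<s}. idx r \<in> Dset)) :: real)
      \<le> real m * (real n ^ m / real n ^ 2)" if s: "s \<in> I" for s
  proof -
    have "(\<Sum>idx\<in>PI. of_bool (idx s \<in> Dset \<and> (\<exists>r\<in>{1..<s}. idx r \<in> Dset)) :: real)
        \<le> (\<Sum>idx\<in>PI. \<Sum>r\<in>{1..<s}. of_bool (\<forall>j\<in>{r, s}. idx j \<in> Dset))"
    proof (rule sum_mono)
      fix idx :: "nat \<Rightarrow> nat"
      have "(of_bool (idx s \<in> Dset \<and> (\<exists>r\<in>{1..<s}. idx r \<in> Dset)) :: real)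
          \<le> of_bool (\<exists>r\<in>{1..<s}. idx r \<in> Dset \<and> idx s \<in> Dset)" by auto
      also have "\<dots> \<le> (\<Sum>r\<in>{1..<s}. of_bool (idx r \<in> Dset \<and> idx s \<in> Dset))"
        by (rule ob) simp
      finally show "(of_bool (idx s \<in> Dset \<and> (\<exists>r\<in>{1..<s}. idx r \<in> Dset)) :: real)
          \<le> (\<Sum>r\<in>{1..<s}. of_bool (\<forall>j\<in>{r, s}. idx j \<in> Dset))" by simp
    qed
    also have "\<dots> = (\<Sum>r\<in>{1..<s}. \<Sum>idx\<in>PI. of_bool (\<forall>j\<in>{r, s}. idx j \<in> Dset))"
      by (rule sum.swap)
    also have "\<dots> \<le> (\<Sum>r\<in>{1..<s}. real n ^ m / real n ^ 2)"
    proof (rule sum_mono)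
      fix r assume r: "r \<in> {1..<s}"
      have sub: "{r, s} \<subseteq> I" using r s unfolding I_def by auto
      have c2: "card {r, s} = 2" using r by auto
      show "(\<Sum>idx\<in>PI. of_bool (\<forall>j\<in>{r, s}. idx j \<in> Dset)) \<le> real n ^ m / real n ^ 2"
        using count_PiE_real[OF fI sub Dn D1 n0] cI c2 unfolding PI_def by simp
    qed
    also have "\<dots> = real (s - 1) * (real n ^ m / real n ^ 2)" by simp
    also have "\<dots> \<le> real m * (real n ^ m / real n ^ 2)"
      using s unfolding I_def by (intro mult_right_mono) auto
    finally show ?thesis .
  qed
  have EE: "idx_expect n T h = (\<Sum>idx\<in>PI. h idx) / real n ^ m"
    unfolding idx_expect_def PI_def IT m_def by simp
  have npos: "real n ^ m > 0" using n0 by simp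
  have B1: "idx_expect n T h \<le> 2 * R"
  proof -
    have "(\<Sum>idx\<in>PI. h idx) \<le> (\<Sum>idx\<in>PI. 2 * R)" using hR by (intro sum_mono) auto
    also have "\<dots> = real n ^ m * (2 * R)" using cPI by simp
    finally show ?thesis unfolding EE using npos by (simp add: divide_le_eq mult.commute)
  qed
  have B2: "idx_expect n T h \<le> 2 * L * SQ * (real m / real n) + 2 * L * SE * (real m / (real n)\<^sup>2)"
  proof -
    define A where "A idx = (of_bool (\<exists>r\<in>I. idx r \<in> Dset) :: real)" for idx :: "nat \<Rightarrow> nat"
    define Bf where "Bf idx s = (of_bool (idx s \<in> Dset \<and> (\<exists>r\<in>{1..<s}. idx r \<in> Dset)) :: real)" for idx :: "nat \<Rightarrow> nat" and s
    have Feq: "F idx = 2 * L * SQ * A idx + (\<Sum>s\<in>I. 2 * L * \<eta> s * Bf idx s)" for idx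
      unfolding F_def A_def Bf_def ..
    have "(\<Sum>idx\<in>PI. h idx) \<le> (\<Sum>idx\<in>PI. F idx)" using key by (intro sum_mono) auto
    also have "\<dots> = (\<Sum>idx\<in>PI. 2 * L * SQ * A idx) + (\<Sum>idx\<in>PI. \<Sum>s\<in>I. 2 * L * \<eta> s * Bf idx s)"
      unfolding Feq by (rule sum.distrib)
    also have "(\<Sum>idx\<in>PI. 2 * L * SQ * A idx) = 2 * L * SQ * (\<Sum>idx\<in>PI. A idx)"
      by (rule sum_distrib_left[symmetric])
    also have "(\<Sum>idx\<in>PI. \<Sum>s\<in>I. 2 * L * \<eta> s * Bf idx s) = (\<Sum>s\<in>I. \<Sum>idx\<in>PI. 2 * L * \<eta> s * Bf idx s)"
      by (rule sum.swap)
    also have "\<dots> = (\<Sum>s\<in>I. 2 * L * \<eta> s * (\<Sum>idx\<in>PI. Bf idx s))"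
      by (simp only: sum_distrib_left)
    also have "2 * L * SQ * (\<Sum>idx\<in>PI. A idx) \<le> 2 * L * SQ * (real m * (real n ^ m / real n))"
      using S1 L0 SQ0 unfolding A_def by (intro mult_left_mono) auto
    also have "(\<Sum>s\<in>I. 2 * L * \<eta> s * (\<Sum>idx\<in>PI. Bf idx s)) \<le> (\<Sum>s\<in>I. 2 * L * \<eta> s * (real m * (real n ^ m / real n ^ 2)))"
    proof (intro sum_mono mult_left_mono)
      fix s assume s: "s \<in> I"
      show "(\<Sum>idx\<in>PI. Bf idx s) \<le> real m * (real n ^ m / real n ^ 2)" using S2[OF s] unfolding Bf_def .
      show "0 \<le> 2 * L * \<eta> s" using L0 etaI[OF s] by simp
    qed
    also have "(\<Sum>s\<in>I. 2 * L * \<eta> s * (real m * (real n ^ m / real n ^ 2))) = 2 * L * SE * (real m * (real n ^ m / real n ^ 2))"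
      unfolding SE_def sum_distrib_left sum_distrib_right by (simp add: mult.assoc)
    finally have "(\<Sum>idx\<in>PI. h idx) \<le> 2 * L * SQ * (real m * (real n ^ m / real n)) + 2 * L * SE * (real m * (real n ^ m / real n ^ 2))"
      by simp
    also have "\<dots> = real n ^ m * (2 * L * SQ * (real m / real n) + 2 * L * SE * (real m / (real n)\<^sup>2))"
      by (simp add: field_simps)
    finally show ?thesis unfolding EE using npos by (simp add: divide_le_eq mult.commute)
  qed
  have B3: "2 * L * SQ * (real m / real n) + 2 * L * SE * (real m / (real n)\<^sup>2)
      \<le> 3 * L * (real m / real n) * (SQ + (1 / real n) * SE)"
  proof -
    have "2 * L * SQ * (real m / real n) + 2 * L * SE * (real m / (real n)\<^sup>2)
        = 2 * L * (real m / real n) * (SQ + (1 / real n) * SE)" using n0 by (simp add: power2_eq_square field_simps)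
    also have "\<dots> \<le> 3 * L * (real m / real n) * (SQ + (1 / real n) * SE)"
      using L0 SQ0 SE0 by (intro mult_right_mono) auto
    finally show ?thesis .
  qed
  have r1: "3 * L * (real (T - 1) / real n) * (sqrt (\<Sum>t=1..T-1. (\<eta> t)\<^sup>2) + (1 / real n) * (\<Sum>t=1..T-1. \<eta> t))
      = 3 * L * (real m / real n) * (SQ + (1/real n) * SE)" by (simp add: SQ_def SE_def I_def m_def)
  have r2: "(\<lambda>idx. norm (rsgd_out X g \<eta> x1 T S idx - rsgd_out X g \<eta> x1 T S' idx)) = h"
    by (simp add: h_def fun_eq_iff)
  show ?thesis unfolding r1 r2 using B1 B2 B3 by simp
qed

end
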